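(* Let $k,\ell\ge1$, let $R=[0,\ell]\times[0,k]$, and let $\mathcal P_{k,\ell}$ be the set of self-avoiding walks on $\mathbb Z^2$ with North, East and South unit steps, starting at $(0,0)$, staying in $R$ and ending at $(\ell,k)$. Let $p$ be the probability distribution on $\mathcal P_{k,\ell}$ produced by the sampling procedure: starting from $(0,0)$, at each time choose uniformly at random one of the eligible steps (a step N, E or S is eligible if appending it gives a self-avoiding N/E/S walk in $R$ that can still be extended into an element of $\mathcal P_{k,\ell}$), until $(\ell,k)$ is reached. Let $X_{k,\ell}=1/p(w)$ where $w$ is drawn according to $p$, so that $\mathbb E(X_{k,\ell}^2)=\sum_{w\in\mathcal P_{k,\ell}}1/p(w)$. Then for every fixed $k\ge1$, $$M_k(x):=\sum_{\ell\ge1}\mathbb E(X_{k,\ell}^2)\,x^\ell=2x\frac{N_k}{G_k},$$ where $N_k,G_k$ are polynomials in $x$ defined by $N_1=2$, $N_2=5+3x$, $N_3=11+9x$, $N_4=23+54x+27x^2$, $G_1=1-4x$, $G_2=1-9x-6x^2$, $G_3=1-19x-18x^2$, $G_4=1-36x-99x^2-54x^3$, and for $k\ge5$, $N_k=(5+9x)N_{k-2}-4N_{k-4}$, $G_k=(5+9x)G_{k-2}-4G_{k-4}$. In particular $M_k(x)$ is a rational series. *)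

theory Defs
  imports Complex_Main "HOL-Computational_Algebra.Polynomial_FPS"
begin

datatype step = N | E | S

fun delta :: "step \<Rightarrow> int \<times> int" where
  "delta N = (0, 1)"
| "delta E = (1, 0)"
| "delta S = (0, -1)"

definition move :: "int \<times> int \<Rightarrow> step \<Rightarrow> int \<times> int" where
  "move q s = (fst q + fst (delta s), snd q + snd (delta s))"

fun path_pts :: "int \<times> int \<Rightarrow> step list \<Rightarrow> (int \<times> int) list" where
  "path_pts q [] = [q]"
| "path_pts q (s # ss) = q # path_pts (move q s) ss"

definition valid_walk :: "nat \<Rightarrow> nat \<Rightarrow> step list \<Rightarrow> bool" where
  "valid_walk k l w \<longleftrightarrow> distinct (path_pts (0,0) w) \<and>
     (\<forall>q\<in>set (path_pts (0,0) w). 0 \<le> fst q \<and> fst q \<le> int l \<and> 0 \<le> snd q \<and> snd q \<le> int k)"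

definition Pwalks :: "nat \<Rightarrow> nat \<Rightarrow> step list set" where
  "Pwalks k l = {w. valid_walk k l w \<and> last (path_pts (0,0) w) = (int l, int k)}"

definition eligible :: "nat \<Rightarrow> nat \<Rightarrow> step list \<Rightarrow> step set" where
  "eligible k l w = {s. valid_walk k l (w @ [s]) \<and> (\<exists>v. w @ [s] @ v \<in> Pwalks k l)}"

definition prob_walk :: "nat \<Rightarrow> nat \<Rightarrow> step list \<Rightarrow> real" where
  "prob_walk k l w = (\<Prod>i<length w. 1 / real (card (eligible k l (take i w))))"

definition EX2 :: "nat \<Rightarrow> nat \<Rightarrow> real" where
  "EX2 k l = (\<Sum>w\<in>Pwalks k l. prob_walk k l w * (1 / prob_walk k l w)^2)"

fun Npoly :: "nat \<Rightarrow> real poly" where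
  "Npoly 0 = 0"
| "Npoly (Suc 0) = [:2:]"
| "Npoly (Suc (Suc 0)) = [:5, 3:]"
| "Npoly (Suc (Suc (Suc 0))) = [:11, 9:]"
| "Npoly (Suc (Suc (Suc (Suc 0)))) = [:23, 54, 27:]"
| "Npoly (Suc (Suc (Suc (Suc (Suc n))))) =
     [:5, 9:] * Npoly (Suc (Suc (Suc n))) - smult 4 (Npoly (Suc n))"

fun Gpoly :: "nat \<Rightarrow> real poly" where
  "Gpoly 0 = 0"
| "Gpoly (Suc 0) = [:1, -4:]"
| "Gpoly (Suc (Suc 0)) = [:1, -9, -6:]"
| "Gpoly (Suc (Suc (Suc 0))) = [:1, -19, -18:]"
| "Gpoly (Suc (Suc (Suc (Suc 0)))) = [:1, -36, -99, -54:]"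
| "Gpoly (Suc (Suc (Suc (Suc (Suc n))))) =
     [:5, 9:] * Gpoly (Suc (Suc (Suc n))) - smult 4 (Gpoly (Suc n))"

end

theory Submission
  imports Defs
begin

unbundle fps_syntax


lemma step_UNIV: "(UNIV :: step set) = {N, E, S}"
  using step.exhaust by auto

lemma finite_step [simp]: "finite (A :: step set)"
proof -
  have "finite (UNIV::step set)" by (simp add: step_UNIV)
  then show ?thesis by (rule finite_subset[rotated]) simp
qed

lemma path_pts_ne [simp]: "path_pts q w \<noteq> []"
  by (cases w) auto

lemma path_pts_snoc: "path_pts q (w @ [s]) = path_pts q w @ [move (last (path_pts q w)) s]"
  by (induction w arbitrary: q) auto

lemma length_path_pts [simp]: "length (path_pts q w) = Suc (length w)"
  by (induction w arbitrary: q) auto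

definition inbox :: "nat \<Rightarrow> nat \<Rightarrow> int \<times> int \<Rightarrow> bool" where
  "inbox k l q \<longleftrightarrow> 0 \<le> fst q \<and> fst q \<le> int l \<and> 0 \<le> snd q \<and> snd q \<le> int k"

abbreviation lp :: "step list \<Rightarrow> int \<times> int" where
  "lp w \<equiv> last (path_pts (0,0) w)"

definition dir :: "step list \<Rightarrow> step" where
  "dir w = (if w = [] then E else last w)"

lemma valid_walk_alt: "valid_walk k l w \<longleftrightarrow> distinct (path_pts (0,0) w) \<and> (\<forall>q\<in>set (path_pts (0,0) w). inbox k l q)"
  unfolding valid_walk_def inbox_def by auto

lemma valid_snoc: "valid_walk k l (w @ [s]) \<longleftrightarrow>
   valid_walk k l w \<and> move (lp w) s \<notin> set (path_pts (0,0) w) \<and> inbox k l (move (lp w) s)"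
  unfolding valid_walk_alt path_pts_snoc by auto

lemma lp_snoc [simp]: "lp (w @ [s]) = move (lp w) s"
  by (simp add: path_pts_snoc)

lemma dir_snoc [simp]: "dir (w @ [s]) = s"
  by (simp add: dir_def)

lemma valid_prefix: "valid_walk k l (w @ v) \<Longrightarrow> valid_walk k l w"
proof (induction v rule: rev_induct)
  case Nil then show ?case by simp
next
  case (snoc s v) then show ?case using valid_snoc[of k l "w @ v" s] by simp
qed

lemma set_prefix: "set (path_pts q w) \<subseteq> set (path_pts q (w @ v))"
  by (induction v rule: rev_induct) (auto simp: path_pts_snoc simp flip: append_assoc)

lemma valid_Nil [simp]: "valid_walk k l []"
  by (simp add: valid_walk_def)

lemma move_simps [simp]:
  "move q E = (fst q + 1, snd q)" "move q N = (fst q, snd q + 1)" "move q S = (fst q, snd q - 1)"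
  by (auto simp: move_def)

lemma lp_in: "lp w \<in> set (path_pts (0,0) w)"
  by simp

lemma lp_inbox: "valid_walk k l w \<Longrightarrow> inbox k l (lp w)"
  by (simp add: valid_walk_alt)

lemma dir_S: "dir w = S \<Longrightarrow> move (lp w) N \<in> set (path_pts (0,0) w)"
proof -
  assume a: "dir w = S"
  then have "w \<noteq> []" by (auto simp: dir_def)
  then obtain w' where w: "w = w' @ [S]" using a by (metis append_butlast_last_id dir_def)
  have "move (lp w) N = lp w'" using w by simp
  then show ?thesis using w lp_in[of w'] set_prefix[of "(0,0)" w' "[S]"] by auto
qed

lemma dir_N: "dir w = N \<Longrightarrow> move (lp w) S \<in> set (path_pts (0,0) w)"
proof -
  assume a: "dir w = N"
  then have "w \<noteq> []" by (auto simp: dir_def)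
  then obtain w' where w: "w = w' @ [N]" using a by (metis append_butlast_last_id dir_def)
  have "move (lp w) S = lp w'" using w by simp
  then show ?thesis using w lp_in[of w'] set_prefix[of "(0,0)" w' "[N]"] by auto
qed

lemma inv:
  assumes "valid_walk k l w"
  shows "\<forall>p\<in>set (path_pts (0,0) w). fst p \<le> fst (lp w) \<and>
     (fst p = fst (lp w) \<longrightarrow> (dir w \<noteq> S \<longrightarrow> snd p \<le> snd (lp w)) \<and> (dir w \<noteq> N \<longrightarrow> snd (lp w) \<le> snd p))"
  using assms
proof (induction w rule: rev_induct)
  case Nil then show ?case by (simp add: dir_def)
next
  case (snoc s w)
  have v: "valid_walk k l w" and nin: "move (lp w) s \<notin> set (path_pts (0,0) w)"
    using snoc.prems valid_snoc by auto
  note IH = snoc.IH[OF v]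
  show ?case
  proof (cases s)
    case N
    have "dir w \<noteq> S" using dir_S[of w] nin N by auto
    then show ?thesis using IH N by (auto simp: path_pts_snoc)
  next
    case S
    have "dir w \<noteq> N" using dir_N[of w] nin S by auto
    then show ?thesis using IH S by (auto simp: path_pts_snoc)
  next
    case E
    then show ?thesis using IH by (fastforce simp: path_pts_snoc)
  qed
qed


lemma ext_col:
  "valid_walk k l w \<Longrightarrow> fst (lp w) = int l \<Longrightarrow> dir w \<noteq> S \<Longrightarrow> \<exists>v. w @ v \<in> Pwalks k l"
proof (induction "nat (int k - snd (lp w))" arbitrary: w rule: less_induct)
  case less
  have ib: "inbox k l (lp w)" using lp_inbox[OF less.prems(1)] .
  show ?case
  proof (cases "snd (lp w) = int k")
    case True
    then have "w @ [] \<in> Pwalks k l" using less.prems by (simp add: Pwalks_def prod_eq_iff)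
    then show ?thesis by blast
  next
    case False
    then have lt: "snd (lp w) < int k" using ib by (simp add: inbox_def)
    have nin: "move (lp w) N \<notin> set (path_pts (0,0) w)"
      using inv[OF less.prems(1)] less.prems(3) by fastforce
    have v: "valid_walk k l (w @ [N])"
      using valid_snoc less.prems(1) nin lt ib by (auto simp: inbox_def)
    have "\<exists>v. (w @ [N]) @ v \<in> Pwalks k l"
      by (rule less.hyps) (use lt v less.prems in auto)
    then show ?thesis by (metis append.assoc append_Cons append_Nil)
  qed
qed

lemma ext_lt:
  "valid_walk k l w \<Longrightarrow> fst (lp w) < int l \<Longrightarrow> \<exists>v. w @ v \<in> Pwalks k l"
proof (induction "nat (int l - fst (lp w))" arbitrary: w rule: less_induct)
  case less
  have ib: "inbox k l (lp w)" using lp_inbox[OF less.prems(1)] .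
  have nin: "move (lp w) E \<notin> set (path_pts (0,0) w)"
    using inv[OF less.prems(1)] by fastforce
  have v: "valid_walk k l (w @ [E])"
    using valid_snoc less.prems nin ib by (auto simp: inbox_def)
  have "\<exists>v. (w @ [E]) @ v \<in> Pwalks k l"
  proof (cases "fst (lp w) + 1 = int l")
    case True
    then show ?thesis by (intro ext_col[OF v]) auto
  next
    case False
    then show ?thesis by (intro less.hyps) (use v less.prems in auto)
  qed
  then show ?case by (metis append.assoc append_Cons append_Nil)
qed

lemma ext_any:
  "valid_walk k l w \<Longrightarrow> fst (lp w) < int l \<or> dir w \<noteq> S \<Longrightarrow> \<exists>v. w @ v \<in> Pwalks k l"
  using ext_lt ext_col lp_inbox[of k l w] by (force simp: inbox_def)

lemma noext:
  "valid_walk k l w \<Longrightarrow> fst (lp w) = int l \<Longrightarrow> dir w = S \<Longrightarrow> w @ v \<notin> Pwalks k l"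
proof (induction v arbitrary: w)
  case Nil
  have "inbox k l (move (lp w) N)"
    using dir_S[OF Nil.prems(3)] Nil.prems(1) by (auto simp: valid_walk_alt)
  then have "lp w \<noteq> (int l, int k)" by (auto simp: inbox_def)
  then show ?case by (simp add: Pwalks_def)
next
  case (Cons s v)
  show ?case
  proof
    assume a: "w @ s # v \<in> Pwalks k l"
    then have vv: "valid_walk k l ((w @ [s]) @ v)" by (simp add: Pwalks_def)
    then have vs: "valid_walk k l (w @ [s])" by (rule valid_prefix)
    show False
    proof (cases s)
      case N then show ?thesis using vs dir_S[OF Cons.prems(3)] valid_snoc by auto
    next
      case E then show ?thesis using vs Cons.prems valid_snoc by (auto simp: inbox_def)
    next
      case S
      have "(w @ [S]) @ v \<notin> Pwalks k l"
        by (rule Cons.IH) (use vs S Cons.prems in auto)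
      then show ?thesis using a S by simp
    qed
  qed
qed

lemma elig_iff:
  "s \<in> eligible k l w \<longleftrightarrow> valid_walk k l (w @ [s]) \<and> (\<exists>v. (w @ [s]) @ v \<in> Pwalks k l)"
  by (simp add: eligible_def)

lemma elig_E:
  assumes "valid_walk k l w"
  shows "E \<in> eligible k l w \<longleftrightarrow> fst (lp w) < int l"
proof
  assume "E \<in> eligible k l w"
  then have "valid_walk k l (w @ [E])" by (simp add: elig_iff)
  then show "fst (lp w) < int l" by (auto simp: valid_snoc inbox_def)
next
  assume lt: "fst (lp w) < int l"
  have ib: "inbox k l (lp w)" using lp_inbox[OF assms] .
  have nin: "move (lp w) E \<notin> set (path_pts (0,0) w)"
    using inv[OF assms] by fastforce
  have v: "valid_walk k l (w @ [E])"
    using valid_snoc assms nin ib lt by (auto simp: inbox_def)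
  show "E \<in> eligible k l w"
    unfolding elig_iff using v ext_any[OF v] by auto
qed

lemma elig_N:
  assumes "valid_walk k l w"
  shows "N \<in> eligible k l w \<longleftrightarrow> snd (lp w) < int k \<and> dir w \<noteq> S"
proof
  assume "N \<in> eligible k l w"
  then have "valid_walk k l (w @ [N])" by (simp add: elig_iff)
  then show "snd (lp w) < int k \<and> dir w \<noteq> S" using dir_S[of w] by (auto simp: valid_snoc inbox_def)
next
  assume lt: "snd (lp w) < int k \<and> dir w \<noteq> S"
  have ib: "inbox k l (lp w)" using lp_inbox[OF assms] .
  have nin: "move (lp w) N \<notin> set (path_pts (0,0) w)"
    using inv[OF assms] lt by fastforce
  have v: "valid_walk k l (w @ [N])"
    using valid_snoc assms nin ib lt by (auto simp: inbox_def)
  show "N \<in> eligible k l w"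
    unfolding elig_iff using v ext_any[OF v] by auto
qed

lemma elig_S:
  assumes "valid_walk k l w"
  shows "S \<in> eligible k l w \<longleftrightarrow> 0 < snd (lp w) \<and> dir w \<noteq> N \<and> fst (lp w) < int l"
proof
  assume a: "S \<in> eligible k l w"
  then have v: "valid_walk k l (w @ [S])" by (simp add: elig_iff)
  then have 1: "0 < snd (lp w) \<and> dir w \<noteq> N" using dir_N[of w] by (auto simp: valid_snoc inbox_def)
  have "fst (lp w) \<le> int l" using lp_inbox[OF assms] by (simp add: inbox_def)
  moreover have "fst (lp w) \<noteq> int l"
  proof
    assume "fst (lp w) = int l"
    then have "\<forall>v. (w @ [S]) @ v \<notin> Pwalks k l" using noext[OF v] by simp
    then show False using a by (simp add: elig_iff)
  qed
  ultimately show "0 < snd (lp w) \<and> dir w \<noteq> N \<and> fst (lp w) < int l" using 1 by simp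
next
  assume lt: "0 < snd (lp w) \<and> dir w \<noteq> N \<and> fst (lp w) < int l"
  have ib: "inbox k l (lp w)" using lp_inbox[OF assms] .
  have nin: "move (lp w) S \<notin> set (path_pts (0,0) w)"
    using inv[OF assms] lt by fastforce
  have v: "valid_walk k l (w @ [S])"
    using valid_snoc assms nin ib lt by (auto simp: inbox_def)
  show "S \<in> eligible k l w"
    unfolding elig_iff using v ext_any[OF v] lt by auto
qed


lemma valid_length:
  assumes "valid_walk k l w" shows "length w < (l+1)*(k+1)"
proof -
  have sub: "set (path_pts (0,0) w) \<subseteq> {0..int l} \<times> {0..int k}"
    using assms by (auto simp: valid_walk_def)
  have "Suc (length w) = card (set (path_pts (0,0) w))"
    using assms by (simp add: valid_walk_def distinct_card)
  also have "\<dots> \<le> card ({0..int l} \<times> {0..int k})"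
    by (rule card_mono[OF _ sub]) simp
  also have "\<dots> = (l+1)*(k+1)" by (simp add: card_cartesian_product nat_add_distrib)
  finally show ?thesis by simp
qed

definition Ext :: "nat \<Rightarrow> nat \<Rightarrow> step list \<Rightarrow> step list set" where
  "Ext k l w = {v. w @ v \<in> Pwalks k l}"

definition Z :: "nat \<Rightarrow> nat \<Rightarrow> step list \<Rightarrow> real" where
  "Z k l w = (\<Sum>v\<in>Ext k l w. \<Prod>i<length v. real (card (eligible k l (w @ take i v))))"

lemma finite_Ext: "finite (Ext k l w)"
proof -
  have "Ext k l w \<subseteq> {v. set v \<subseteq> UNIV \<and> length v \<le> (l+1)*(k+1)}"
    using valid_length by (fastforce simp: Ext_def Pwalks_def)
  then show ?thesis by (rule finite_subset) (rule finite_lists_length_le, simp)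
qed

lemma finite_Pwalks: "finite (Pwalks k l)"
  using finite_Ext[of k l "[]"] by (simp add: Ext_def)

lemma Ext_Pwalks:
  assumes "w \<in> Pwalks k l" shows "Ext k l w = {[]}"
proof -
  have "v = []" if "w @ v \<in> Pwalks k l" for v
  proof (rule ccontr)
    assume "v \<noteq> []"
    then obtain v' s where vs: "v = v' @ [s]" by (metis rev_exhaust)
    have val: "valid_walk k l ((w @ v') @ [s])" using that vs by (simp add: Pwalks_def)
    have "move (lp (w @ v')) s = (int l, int k)"
      using that vs by (simp add: Pwalks_def flip: append_assoc)
    also have "\<dots> = lp w" using assms by (simp add: Pwalks_def)
    finally have "move (lp (w @ v')) s \<in> set (path_pts (0,0) (w @ v'))"
      using set_prefix[of "(0,0)" w v'] lp_in[of w] by auto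
    then show False using val valid_snoc by blast
  qed
  then show ?thesis using assms by (auto simp: Ext_def)
qed

lemma Ext_step:
  assumes "w \<notin> Pwalks k l"
  shows "Ext k l w = (\<Union>s\<in>eligible k l w. (Cons s) ` Ext k l (w @ [s]))"
proof
  show "Ext k l w \<subseteq> (\<Union>s\<in>eligible k l w. (Cons s) ` Ext k l (w @ [s]))"
  proof
    fix v assume "v \<in> Ext k l w"
    then have v: "w @ v \<in> Pwalks k l" by (simp add: Ext_def)
    then have "v \<noteq> []" using assms by auto
    then obtain s v' where vs: "v = s # v'" by (cases v) auto
    have "valid_walk k l ((w @ [s]) @ v')" using v vs by (simp add: Pwalks_def)
    then have "valid_walk k l (w @ [s])" by (rule valid_prefix)
    then have "s \<in> eligible k l w" using v vs by (auto simp: eligible_def)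
    moreover have "v' \<in> Ext k l (w @ [s])" using v vs by (simp add: Ext_def)
    ultimately show "v \<in> (\<Union>s\<in>eligible k l w. (Cons s) ` Ext k l (w @ [s]))" using vs by blast
  qed
next
  show "(\<Union>s\<in>eligible k l w. (Cons s) ` Ext k l (w @ [s])) \<subseteq> Ext k l w"
    by (auto simp: Ext_def)
qed

lemma Z_rec:
  "Z k l w = (if w \<in> Pwalks k l then 1 else
     (\<Sum>s\<in>eligible k l w. real (card (eligible k l w)) * Z k l (w @ [s])))"
proof (cases "w \<in> Pwalks k l")
  case True then show ?thesis by (simp add: Z_def Ext_Pwalks)
next
  case False
  have "Z k l w = (\<Sum>s\<in>eligible k l w. \<Sum>v\<in>(Cons s) ` Ext k l (w @ [s]).
          \<Prod>i<length v. real (card (eligible k l (w @ take i v))))"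
    unfolding Z_def Ext_step[OF False]
    by (rule sum.UNION_disjoint) (auto simp: finite_Ext)
  also have "\<dots> = (\<Sum>s\<in>eligible k l w. real (card (eligible k l w)) * Z k l (w @ [s]))"
  proof (rule sum.cong[OF refl])
    fix s
    have "(\<Sum>v\<in>(Cons s) ` Ext k l (w @ [s]). \<Prod>i<length v. real (card (eligible k l (w @ take i v))))
       = (\<Sum>v\<in>Ext k l (w @ [s]). \<Prod>i<length (s # v). real (card (eligible k l (w @ take i (s # v)))))"
      by (subst sum.reindex) auto
    also have "\<dots> = (\<Sum>v\<in>Ext k l (w @ [s]). real (card (eligible k l w)) *
                    (\<Prod>i<length v. real (card (eligible k l ((w @ [s]) @ take i v)))))"
      apply (rule sum.cong[OF refl])
      apply (subst length_Cons)
      apply (subst prod.lessThan_Suc_shift)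
      by simp
    also have "\<dots> = real (card (eligible k l w)) * Z k l (w @ [s])"
      by (simp add: Z_def sum_distrib_left)
    finally show "(\<Sum>v\<in>(Cons s) ` Ext k l (w @ [s]). \<Prod>i<length v. real (card (eligible k l (w @ take i v))))
       = real (card (eligible k l w)) * Z k l (w @ [s])" .
  qed
  finally show ?thesis using False by simp
qed

lemma EX2_Z: "EX2 k l = Z k l []"
proof -
  have "prob_walk k l w * (1 / prob_walk k l w)^2 = (\<Prod>i<length w. real (card (eligible k l (take i w))))"
    if w: "w \<in> Pwalks k l" for w
  proof -
    have "card (eligible k l (take i w)) \<noteq> 0" if i: "i < length w" for i
    proof -
      have "w = (take i w @ [w ! i]) @ drop (Suc i) w"
        using i by (simp add: Cons_nth_drop_Suc)
      then have "w ! i \<in> eligible k l (take i w)"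
        using w valid_prefix[of k l "take i w @ [w ! i]" "drop (Suc i) w"]
        unfolding eligible_def Pwalks_def by (metis (mono_tags, lifting) append.assoc mem_Collect_eq)
      then show ?thesis by (metis card_0_eq finite_step empty_iff)
    qed
    then have "prob_walk k l w \<noteq> 0" by (simp add: prob_walk_def)
    then have "prob_walk k l w * (1 / prob_walk k l w)^2 = 1 / prob_walk k l w"
      by (simp add: power2_eq_square)
    also have "\<dots> = (\<Prod>i<length w. real (card (eligible k l (take i w))))"
      by (simp add: prob_walk_def prod_dividef)
    finally show ?thesis .
  qed
  then show ?thesis by (simp add: EX2_def Z_def Ext_def)
qed


definition cc :: "nat \<Rightarrow> nat \<Rightarrow> real" where
  "cc k a = 1 + (if a < k then 1 else 0) + (if 0 < a then 1 else 0)"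

definition KK :: "nat \<Rightarrow> nat \<Rightarrow> nat \<Rightarrow> real" where
  "KK k a h = (if h = a then 1 else if a < h then 2^(h-a-1) * (if h < k then 2 else 1)
               else 2^(a-h-1) * (if 0 < h then 2 else 1))"

fun uu :: "nat \<Rightarrow> nat \<Rightarrow> nat \<Rightarrow> real" where
  "uu k 0 a = 1"
| "uu k (Suc n) a = cc k a * (\<Sum>h\<le>k. KK k a h * uu k n h)"

definition upN :: "nat \<Rightarrow> nat \<Rightarrow> nat \<Rightarrow> real" where
  "upN k n y = (\<Sum>h\<in>{y..k}. 2^(h-y) * (if h < k then 2 else 1) * uu k n h)"

definition upS :: "nat \<Rightarrow> nat \<Rightarrow> nat \<Rightarrow> real" where
  "upS k n y = (\<Sum>h\<in>{..y}. 2^(y-h) * (if 0 < h then 2 else 1) * uu k n h)"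

definition Phi :: "nat \<Rightarrow> nat \<Rightarrow> nat \<Rightarrow> nat \<Rightarrow> step \<Rightarrow> real" where
  "Phi k l i y d = (if l \<le> i then (if d = S then 0 else 1) else
     (case d of E \<Rightarrow> uu k (l-i) y | N \<Rightarrow> upN k (l-i-1) y | S \<Rightarrow> upS k (l-i-1) y))"

lemma C2: "y \<le> k \<Longrightarrow> upN k n y = (if y<k then 2 else 1) * (uu k n y + (if y<k then upN k n (y+1) else 0))"
proof (cases "y < k")
  case True
  have "{y..k} = insert y {Suc y..k}" using True by auto
  then have "upN k n y = 2 * uu k n y + (\<Sum>h\<in>{Suc y..k}. 2^(h-y) * (if h < k then 2 else 1) * uu k n h)"
    using True by (simp add: upN_def)
  also have "(\<Sum>h\<in>{Suc y..k}. 2^(h-y) * (if h < k then 2 else 1) * uu k n h) = 2 * upN k n (y+1)"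
    unfolding upN_def sum_distrib_left
  proof (rule sum.cong)
    fix h assume "h \<in> {y+1..k}"
    then have "h - y = Suc (h - (y + 1))" by auto
    then show "2 ^ (h - y) * (if h < k then 2 else 1) * uu k n h =
          2 * (2 ^ (h - (y + 1)) * (if h < k then 2 else 1) * uu k n h)" by simp
  qed simp
  finally show ?thesis using True by (simp add: algebra_simps)
next
  case False
  assume "y \<le> k" then have "y = k" using False by simp
  then show ?thesis by (simp add: upN_def)
qed

lemma C3: "upS k n y = (if 0<y then 2 else 1) * (uu k n y + (if 0<y then upS k n (y-1) else 0))"
proof (cases "0 < y")
  case True
  have "{..y} = insert y {..y-1}" using True by auto
  then have "upS k n y = 2 * uu k n y + (\<Sum>h\<in>{..y-1}. 2^(y-h) * (if 0 < h then 2 else 1) * uu k n h)"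
    using True by (simp add: upS_def)
  also have "(\<Sum>h\<in>{..y-1}. 2^(y-h) * (if 0 < h then 2 else 1) * uu k n h) = 2 * upS k n (y-1)"
    unfolding upS_def sum_distrib_left
  proof (rule sum.cong)
    fix h assume "h \<in> {..y-1}"
    then have "y - h = Suc (y - 1 - h)" using True by auto
    then show "2 ^ (y - h) * (if 0 < h then 2 else 1) * uu k n h =
          2 * (2 ^ (y - 1 - h) * (if 0 < h then 2 else 1) * uu k n h)" by simp
  qed simp
  finally show ?thesis using True by (simp add: algebra_simps)
next
  case False
  then show ?thesis by (simp add: upS_def)
qed

lemma C1:
  assumes "y \<le> k"
  shows "uu k (Suc n) y = cc k y * (uu k n y + (if y<k then upN k n (y+1) else 0)
                                     + (if 0<y then upS k n (y-1) else 0))"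
proof -
  have dec: "{..k} = {..<y} \<union> ({y} \<union> {y<..k})" using assms by auto
  have "(\<Sum>h\<le>k. KK k y h * uu k n h) = (\<Sum>h\<in>{..<y}. KK k y h * uu k n h)
         + (KK k y y * uu k n y + (\<Sum>h\<in>{y<..k}. KK k y h * uu k n h))"
    unfolding dec by (simp add: sum.union_disjoint) (rule sum.union_disjoint, auto)
  also have "(\<Sum>h\<in>{y<..k}. KK k y h * uu k n h) = (if y<k then upN k n (y+1) else 0)"
  proof (cases "y < k")
    case True
    have "{y<..k} = {y+1..k}" by auto
    then show ?thesis using True unfolding upN_def
    proof (simp only: if_True)
      show "(\<Sum>h\<in>{y+1..k}. KK k y h * uu k n h) =
            (\<Sum>h\<in>{y+1..k}. 2 ^ (h - (y+1)) * (if h < k then 2 else 1) * uu k n h)"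
      proof (rule sum.cong[OF refl])
        fix h assume "h \<in> {y+1..k}"
        then have "h \<noteq> y" "y < h" by auto
        then show "KK k y h * uu k n h = 2 ^ (h - (y+1)) * (if h < k then 2 else 1) * uu k n h"
          unfolding KK_def by simp
      qed
    qed
  next
    case False then show ?thesis by simp
  qed
  also have "(\<Sum>h\<in>{..<y}. KK k y h * uu k n h) = (if 0<y then upS k n (y-1) else 0)"
  proof (cases "0 < y")
    case True
    have "{..<y} = {..y-1}" using True by auto
    then show ?thesis using True unfolding upS_def
    proof (simp only: if_True)
      show "(\<Sum>h\<in>{..y-1}. KK k y h * uu k n h) =
            (\<Sum>h\<in>{..y-1}. 2 ^ (y - 1 - h) * (if 0 < h then 2 else 1) * uu k n h)"
      proof (rule sum.cong[OF refl])
        fix h assume "h \<in> {..y-1}"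
        then have "h \<noteq> y" "\<not> y < h" "y - h - 1 = y - 1 - h" using True by auto
        then show "KK k y h * uu k n h = 2 ^ (y - 1 - h) * (if 0 < h then 2 else 1) * uu k n h"
          unfolding KK_def by simp
      qed
    qed
  next
    case False then show ?thesis by simp
  qed
  finally have "(\<Sum>h\<le>k. KK k y h * uu k n h) = (if 0<y then upS k n (y-1) else 0) + (uu k n y + (if y<k then upN k n (y+1) else 0))"
    by (simp add: KK_def)
  then show ?thesis by simp
qed

lemma sum_step3: "sum f (A :: step set) = (if E \<in> A then f E else 0) + (if N \<in> A then f N else 0) + (if S \<in> A then f S else 0)"
proof -
  have "sum f A = sum (\<lambda>s. if s \<in> A then f s else 0) UNIV"
    by (simp add: sum.If_cases Int_absorb1)
  also have "\<dots> = (if E \<in> A then f E else 0) + (if N \<in> A then f N else 0) + (if S \<in> A then f S else 0)"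
    by (simp add: step_UNIV add.commute add.left_commute)
  finally show ?thesis .
qed

lemma card_step3: "real (card (A :: step set)) = (if E \<in> A then 1 else 0) + (if N \<in> A then 1 else 0) + (if S \<in> A then 1 else 0)"
  using sum_step3[of "\<lambda>_. (1::real)" A] by simp

lemma Z_Phi:
  "valid_walk k l w \<Longrightarrow> lp w = (int i, int y) \<Longrightarrow> Z k l w = Phi k l i y (dir w)"
proof (induction "(l+1)*(k+1) - length w" arbitrary: w i y rule: less_induct)
  case less
  have ib: "i \<le> l" "y \<le> k" using lp_inbox[OF less.prems(1)] less.prems(2) by (auto simp: inbox_def)
  have IH: "Z k l (w @ [s]) = Phi k l i' y' s"
    if "s \<in> eligible k l w" "move (int i, int y) s = (int i', int y')" for s i' y'
  proof -
    have v: "valid_walk k l (w @ [s])" using that by (simp add: eligible_def)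
    have "length (w @ [s]) < (l+1)*(k+1)" by (rule valid_length[OF v])
    then show ?thesis
      using less.hyps[of "w @ [s]" i' y'] v that less.prems by simp
  qed
  have eE: "E \<in> eligible k l w \<longleftrightarrow> i < l" using elig_E[OF less.prems(1)] less.prems(2) by simp
  have eN: "N \<in> eligible k l w \<longleftrightarrow> y < k \<and> dir w \<noteq> S" using elig_N[OF less.prems(1)] less.prems(2) by simp
  have eS: "S \<in> eligible k l w \<longleftrightarrow> 0 < y \<and> dir w \<noteq> N \<and> i < l" using elig_S[OF less.prems(1)] less.prems(2) by simp
  have ZE: "i < l \<Longrightarrow> Z k l (w @ [E]) = uu k (l - i - 1) y"
    using IH[of E "Suc i" y] eE by (simp add: Phi_def)
  have ZN: "y < k \<Longrightarrow> dir w \<noteq> S \<Longrightarrow> Z k l (w @ [N]) = Phi k l i (Suc y) N"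
    using IH[of N i "Suc y"] eN by simp
  have ZS: "0 < y \<Longrightarrow> dir w \<noteq> N \<Longrightarrow> i < l \<Longrightarrow> Z k l (w @ [S]) = Phi k l i (y - 1) S"
    using IH[of S i "y - 1"] eS by simp
  have P: "w \<in> Pwalks k l \<longleftrightarrow> i = l \<and> y = k"
    using less.prems by (auto simp: Pwalks_def)
  have rec: "Z k l w = (if i = l \<and> y = k then 1 else
      ((if i < l then 1 else 0) + (if y < k \<and> dir w \<noteq> S then 1 else 0) + (if 0 < y \<and> dir w \<noteq> N \<and> i < l then 1 else 0))
      * ((if i < l then Z k l (w @ [E]) else 0) + (if y < k \<and> dir w \<noteq> S then Z k l (w @ [N]) else 0)
         + (if 0 < y \<and> dir w \<noteq> N \<and> i < l then Z k l (w @ [S]) else 0)))"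
    apply (subst Z_rec)
    apply (simp only: P)
    apply (subst sum_distrib_left[symmetric])
    apply (subst sum_step3)
    apply (subst card_step3)
    apply (simp only: eE eN eS)
    done
  show ?case
  proof (cases "i < l")
    case True
    then have nl: "\<not> l \<le> i" by simp
    have u1: "uu k (l - i) y = uu k (Suc (l - i - 1)) y" using True by (simp add: Suc_diff_Suc)
    show ?thesis
    proof (cases "dir w")
      case E
      show ?thesis
        unfolding rec Phi_def u1 C1[OF ib(2)] using True E ZE ZN ZS
        by (auto simp: Phi_def cc_def)
    next
      case N
      show ?thesis
        unfolding rec using True N ZE ZN C2[OF ib(2), of "l-i-1"]
        by (auto simp: Phi_def)
    next
      case S
      show ?thesis
        unfolding rec using True S ZE ZS C3[of k "l-i-1" y]
        by (auto simp: Phi_def)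
    qed
  next
    case False
    then have il: "i = l" using ib by simp
    show ?thesis
    proof (cases "y = k")
      case True
      have "dir w \<noteq> S"
      proof
        assume "dir w = S"
        then have "inbox k l (move (lp w) N)"
          using dir_S[of w] less.prems(1) by (auto simp: valid_walk_alt)
        then show False using less.prems(2) True by (simp add: inbox_def)
      qed
      then show ?thesis unfolding rec using il True by (simp add: Phi_def)
    next
      case False
      then have yk: "y < k" using ib by simp
      show ?thesis
        unfolding rec using il yk ZN by (auto simp: Phi_def)
    qed
  qed
qed

lemma EX2_uu: "1 \<le> l \<Longrightarrow> EX2 k l = uu k l 0"
  using Z_Phi[of k l "[]" 0 0] by (simp add: EX2_Z Phi_def dir_def)



definition V :: "nat \<Rightarrow> nat \<Rightarrow> real fps" where
  "V k a = Abs_fps (\<lambda>n. uu k n a)"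

definition pw :: "nat \<Rightarrow> nat \<Rightarrow> real" where
  "pw a h = (if a \<le> h then 2^(h-a) else 2^(a-h))"

definition rho :: "nat \<Rightarrow> nat \<Rightarrow> real" where
  "rho k h = (if h = 0 \<or> h = k then 1 else 2)"

definition gsum :: "nat \<Rightarrow> nat \<Rightarrow> nat \<Rightarrow> real" where
  "gsum k a n = (\<Sum>h\<le>k. pw a h * rho k h * uu k n h)"

definition gg :: "nat \<Rightarrow> nat \<Rightarrow> real fps" where
  "gg k a = Abs_fps (gsum k a)"

lemma sum_rev_atMost: "(\<Sum>h\<le>(k::nat). g h) = (\<Sum>h\<le>k. g (k - h))"
  by (rule sum.reindex_bij_witness[where i="\<lambda>h. k-h" and j="\<lambda>h. k-h"]) auto

lemma pow2_split: "(a::nat) < h \<Longrightarrow> (2::real) ^ (h - a) = 2 * 2 ^ (h - a - 1)"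
proof -
  assume "a < h"
  then have "h - a = Suc (h - a - 1)" by simp
  then show ?thesis by (metis power_Suc)
qed

lemma KK2:
  assumes "1 \<le> k" "a \<le> k" "h \<le> k"
  shows "2 * KK k a h = pw a h * rho k h + (if h = a \<and> (a = 0 \<or> a = k) then 1 else 0)"
proof -
  consider "h = a" | "a < h" | "h < a" by linarith
  then show ?thesis
  proof cases
    case 1
    have "KK k a h = 1" "pw a h = 1" unfolding KK_def pw_def using 1 by simp_all
    then show ?thesis using 1 unfolding rho_def by simp
  next
    case 2
    then have p: "(2::real) ^ (h - a) = 2 * 2 ^ (h - a - 1)" by (rule pow2_split)
    have K: "KK k a h = 2 ^ (h - a - 1) * (if h < k then 2 else 1)" unfolding KK_def using 2 by simp
    have W: "pw a h = 2 ^ (h - a)" unfolding pw_def using 2 by simp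
    have R: "rho k h = (if h < k then 2 else 1)" unfolding rho_def using 2 assms by auto
    show ?thesis unfolding K W R p using 2 by simp
  next
    case 3
    then have p: "(2::real) ^ (a - h) = 2 * 2 ^ (a - h - 1)" by (rule pow2_split)
    have K: "KK k a h = 2 ^ (a - h - 1) * (if 0 < h then 2 else 1)" unfolding KK_def using 3 by simp
    have W: "pw a h = 2 ^ (a - h)" unfolding pw_def using 3 by simp
    have R: "rho k h = (if 0 < h then 2 else 1)" unfolding rho_def using 3 assms by auto
    show ?thesis unfolding K W R p using 3 by simp
  qed
qed

lemma Sys2:
  assumes "1 \<le> k" "a \<le> k"
  shows "2 * (\<Sum>h\<le>k. KK k a h * uu k n h) = gsum k a n + (if a = 0 \<or> a = k then uu k n a else 0)"
proof -
  have "2 * (\<Sum>h\<le>k. KK k a h * uu k n h) = (\<Sum>h\<le>k. (2 * KK k a h) * uu k n h)"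
    by (simp add: sum_distrib_left mult.assoc)
  also have "\<dots> = (\<Sum>h\<le>k. pw a h * rho k h * uu k n h + (if h = a then (if a = 0 \<or> a = k then uu k n h else 0) else 0))"
    by (rule sum.cong[OF refl]) (use assms in \<open>simp add: KK2 distrib_right\<close>)
  also have "\<dots> = gsum k a n + (if a = 0 \<or> a = k then uu k n a else 0)"
    using assms by (simp add: sum.distrib gsum_def)
  finally show ?thesis .
qed

lemma nth_num: "(numeral c * f) $ n = numeral c * (f $ n :: real)"
  by (simp add: fps_numeral_fps_const)

lemma nth_num0 [simp]: "(numeral c :: real fps) $ n = (if n = 0 then numeral c else 0)"
  by (simp add: fps_numeral_fps_const)

lemma V0eq: "1 \<le> k \<Longrightarrow> V k 0 = 1 + fps_X * (gg k 0 + V k 0)"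
proof (rule fps_ext)
  fix n assume k: "1 \<le> k"
  show "V k 0 $ n = (1 + fps_X * (gg k 0 + V k 0)) $ n"
  proof (cases n)
    case 0 then show ?thesis by (simp add: V_def)
  next
    case (Suc m)
    have "uu k (Suc m) 0 = 2 * (\<Sum>h\<le>k. KK k 0 h * uu k m h)" using k by (simp add: cc_def)
    also have "\<dots> = gsum k 0 m + uu k m 0" using Sys2[of k 0 m] k by simp
    finally show ?thesis using Suc by (simp add: V_def gg_def)
  qed
qed

lemma Vieq: "0 < a \<Longrightarrow> a < k \<Longrightarrow> 2 * V k a = 2 + 3 * (fps_X * gg k a)"
proof (rule fps_ext)
  fix n assume a: "0 < a" "a < k"
  show "(2 * V k a) $ n = (2 + 3 * (fps_X * gg k a)) $ n"
  proof (cases n)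
    case 0 then show ?thesis by (simp add: V_def nth_num)
  next
    case (Suc m)
    have "2 * uu k (Suc m) a = 3 * (2 * (\<Sum>h\<le>k. KK k a h * uu k m h))" using a by (simp add: cc_def)
    also have "\<dots> = 3 * gsum k a m" using Sys2[of k a m] a by simp
    finally show ?thesis using Suc by (simp add: V_def gg_def nth_num)
  qed
qed



lemma pw1: "2 * pw 1 h = pw 0 h + (if h = 0 then 3 else 0)"
  by (cases h) (auto simp: pw_def)

lemma pwrec:
  assumes "1 \<le> a"
  shows "2 * pw (a+1) h + 2 * pw (a-1) h = 5 * pw a h + (if h = a then 3 else 0)"
proof -
  consider "h = a" | "a < h" | "h < a" by linarith
  then show ?thesis
  proof cases
    case 1
    have "pw (a+1) h = 2" "pw (a-1) h = 2" "pw a h = 1"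
      unfolding pw_def using 1 assms by auto
    then show ?thesis using 1 by simp
  next
    case 2
    define j where "j = h - a - 1"
    have j: "h = a + 1 + j" using 2 by (simp add: j_def)
    have "pw (a+1) h = 2^j" "pw (a-1) h = 2^(Suc (Suc j))" "pw a h = 2^(Suc j)"
      unfolding pw_def using j assms by (auto simp: Suc_diff_le power_add)
    moreover have "h \<noteq> a" using j by simp
    ultimately show ?thesis by simp
  next
    case 3
    define j where "j = a - h - 1"
    have j: "a = h + 1 + j" using 3 by (simp add: j_def)
    show ?thesis
    proof (cases j)
      case 0
      have "pw (a+1) h = 2^(Suc (Suc 0))" "pw (a-1) h = 1" "pw a h = 2"
        unfolding pw_def using j 0 by (auto simp: power_add)
      moreover have "h \<noteq> a" using j by simp
      ultimately show ?thesis by simp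
    next
      case (Suc i)
      have "pw (a+1) h = 2^(Suc (Suc (Suc i)))" "pw (a-1) h = 2^(Suc i)" "pw a h = 2^(Suc (Suc i))"
        unfolding pw_def using j Suc by (auto simp: power_add)
      moreover have "h \<noteq> a" using j by simp
      ultimately show ?thesis by simp
    qed
  qed
qed

lemma g1eq: "1 \<le> k \<Longrightarrow> 2 * gg k 1 = gg k 0 + 3 * V k 0"
proof (rule fps_ext)
  fix n assume k: "1 \<le> k"
  have "2 * gsum k 1 n = (\<Sum>h\<le>k. (2 * pw 1 h) * rho k h * uu k n h)"
    by (simp add: gsum_def sum_distrib_left mult.assoc)
  also have "\<dots> = (\<Sum>h\<le>k. pw 0 h * rho k h * uu k n h + (if h = 0 then 3 * uu k n h else 0))"
    by (rule sum.cong[OF refl], subst pw1) (auto simp: rho_def distrib_right)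
  also have "\<dots> = gsum k 0 n + 3 * uu k n 0"
    by (simp add: sum.distrib gsum_def)
  finally show "(2 * gg k 1) $ n = (gg k 0 + 3 * V k 0) $ n"
    by (simp add: gg_def V_def nth_num)
qed

lemma grec:
  assumes "1 \<le> a" "a < k"
  shows "2 * gg k (a+1) + 2 * gg k (a-1) = 5 * gg k a + 6 * V k a"
proof (rule fps_ext)
  fix n
  have "2 * gsum k (a+1) n + 2 * gsum k (a-1) n = (\<Sum>h\<le>k. (2 * pw (a+1) h + 2 * pw (a-1) h) * rho k h * uu k n h)"
    by (simp add: gsum_def sum_distrib_left sum.distrib[symmetric] distrib_right mult.assoc)
  also have "\<dots> = (\<Sum>h\<le>k. 5 * (pw a h * rho k h * uu k n h) + (if h = a then 6 * uu k n h else 0))"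
    by (rule sum.cong[OF refl], subst pwrec[OF assms(1)]) (use assms in \<open>auto simp: rho_def distrib_right\<close>)
  also have "\<dots> = 5 * gsum k a n + 6 * uu k n a"
    using assms by (simp add: sum.distrib gsum_def sum_distrib_left)
  finally show "(2 * gg k (a+1) + 2 * gg k (a-1)) $ n = (5 * gg k a + 6 * V k a) $ n"
    by (simp add: gg_def V_def nth_num)
qed

lemma cc_sym: "a \<le> k \<Longrightarrow> cc k (k - a) = cc k a"
  by (auto simp: cc_def)

lemma KK_sym: "a \<le> k \<Longrightarrow> h \<le> k \<Longrightarrow> KK k (k - a) (k - h) = KK k a h"
  by (auto simp: KK_def)

lemma uu_sym: "a \<le> k \<Longrightarrow> uu k n (k - a) = uu k n a"
proof (induction n arbitrary: a)
  case 0 then show ?case by simp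
next
  case (Suc n)
  have "(\<Sum>h\<le>k. KK k (k - a) h * uu k n h) = (\<Sum>h\<le>k. KK k (k - a) (k - h) * uu k n (k - h))"
    by (rule sum_rev_atMost)
  also have "\<dots> = (\<Sum>h\<le>k. KK k a h * uu k n h)"
    by (rule sum.cong[OF refl]) (use Suc in \<open>auto simp: KK_sym\<close>)
  finally show ?case using Suc.prems by (simp add: cc_sym)
qed

lemma gg_sym: "a \<le> k \<Longrightarrow> gg k (k - a) = gg k a"
proof -
  assume a: "a \<le> k"
  have "gsum k (k - a) n = gsum k a n" for n
  proof -
    have "gsum k (k - a) n = (\<Sum>h\<le>k. pw (k - a) (k - h) * rho k (k - h) * uu k n (k - h))"
      unfolding gsum_def by (rule sum_rev_atMost)
    also have "\<dots> = gsum k a n" unfolding gsum_def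
      by (rule sum.cong[OF refl]) (use a in \<open>auto simp: uu_sym pw_def rho_def\<close>)
    finally show ?thesis .
  qed
  then have "gsum k (k - a) = gsum k a" by (rule ext)
  then show ?thesis by (simp add: gg_def)
qed



fun Pf :: "nat \<Rightarrow> real fps" where
  "Pf 0 = 1 - fps_X"
| "Pf (Suc 0) = 1 + 2 * fps_X"
| "Pf (Suc (Suc a)) = (5 + 9 * fps_X) * Pf (Suc a) - 4 * Pf a"

fun Qf :: "nat \<Rightarrow> real fps" where
  "Qf 0 = 0"
| "Qf (Suc 0) = 3"
| "Qf (Suc (Suc a)) = (5 + 9 * fps_X) * Qf (Suc a) - 4 * Qf a + 6 * 2 ^ Suc a * (1 - fps_X)"

abbreviation Gf :: "nat \<Rightarrow> real fps" where "Gf k \<equiv> fps_of_poly (Gpoly k)"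
abbreviation Nf :: "nat \<Rightarrow> real fps" where "Nf k \<equiv> fps_of_poly (Npoly k)"

lemmas fpsp = fps_of_poly_mult fps_of_poly_diff fps_of_poly_smult fps_of_poly_pCons fps_of_poly_add
  fps_numeral_fps_const

lemma G1: "Gf 1 = 1 - 4 * fps_X" by (simp add: fpsp algebra_simps)
lemma G2: "Gf 2 = 1 - 9 * fps_X - 6 * fps_X^2" by (simp add: fpsp algebra_simps power2_eq_square numeral_eq_Suc)
lemma G3: "Gf 3 = 1 - 19 * fps_X - 18 * fps_X^2" by (simp add: fpsp algebra_simps power2_eq_square numeral_eq_Suc)
lemma G4: "Gf 4 = 1 - 36 * fps_X - 99 * fps_X^2 - 54 * fps_X^3"
  by (simp add: fpsp algebra_simps power2_eq_square power3_eq_cube numeral_eq_Suc)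
lemma N1: "Nf 1 = 2" by (simp add: fpsp)
lemma N2: "Nf 2 = 5 + 3 * fps_X" by (simp add: fpsp algebra_simps numeral_eq_Suc)
lemma N3: "Nf 3 = 11 + 9 * fps_X" by (simp add: fpsp algebra_simps numeral_eq_Suc)
lemma N4: "Nf 4 = 23 + 54 * fps_X + 27 * fps_X^2" by (simp add: fpsp algebra_simps power2_eq_square numeral_eq_Suc)

lemma Grec0: "Gf (Suc (Suc (Suc (Suc (Suc j))))) = (5 + 9 * fps_X) * Gf (Suc (Suc (Suc j))) - 4 * Gf (Suc j)"
  apply (simp only: Gpoly.simps(6) fps_of_poly_diff fps_of_poly_mult fps_of_poly_smult fps_of_poly_pCons fps_of_poly_const)
  apply (simp add: fps_numeral_fps_const algebra_simps)
  done

lemma Grec: "1 \<le> k \<Longrightarrow> Gf (k + 4) = (5 + 9 * fps_X) * Gf (k + 2) - 4 * Gf k"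
proof -
  assume "1 \<le> k"
  then obtain j where j: "k = Suc j" by (cases k) auto
  have e: "k + 4 = Suc (Suc (Suc (Suc (Suc j))))" "k + 2 = Suc (Suc (Suc j))" using j by simp_all
  show ?thesis by (subst e(1), subst e(2), subst j, rule Grec0)
qed

lemma Nrec0: "Nf (Suc (Suc (Suc (Suc (Suc j))))) = (5 + 9 * fps_X) * Nf (Suc (Suc (Suc j))) - 4 * Nf (Suc j)"
  apply (simp only: Npoly.simps(6) fps_of_poly_diff fps_of_poly_mult fps_of_poly_smult fps_of_poly_pCons fps_of_poly_const)
  apply (simp add: fps_numeral_fps_const algebra_simps)
  done

lemma Nrec: "1 \<le> k \<Longrightarrow> Nf (k + 4) = (5 + 9 * fps_X) * Nf (k + 2) - 4 * Nf k"
proof -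
  assume "1 \<le> k"
  then obtain j where j: "k = Suc j" by (cases k) auto
  have e: "k + 4 = Suc (Suc (Suc (Suc (Suc j))))" "k + 2 = Suc (Suc (Suc j))" using j by simp_all
  show ?thesis by (subst e(1), subst e(2), subst j, rule Nrec0)
qed



lemma alg_even1:
  fixes P0 P1 P2 P3 P4 G0 G2 G4 c :: "real fps"
  assumes "G4 = c * G2 - 4 * G0" "P4 = c * P3 - 4 * P2" "P2 = c * P1 - 4 * P0"
    "P2 - 4 * P0 = -3 * G0" "P3 - 4 * P1 = -3 * G2"
  shows "P4 - 4 * P2 = -3 * G4"
  using assms by algebra

lemma alg_even2:
  fixes P0 P1 P2 P3 P4 Q0 Q1 Q2 Q3 Q4 N0 N2 N4 c t X :: "real fps"
  assumes "N4 = c * N2 - 4 * N0" "P4 = c * P3 - 4 * P2" "P2 = c * P1 - 4 * P0"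
    "Q4 = c * Q3 - 4 * Q2 + 6 * (4 * t) * (1 - X)" "Q2 = c * Q1 - 4 * Q0 + 6 * t * (1 - X)"
    "P2 - 4 * P0 + 4 * Q0 - Q2 = -6 * (1 - X) * N0"
    "P3 - 4 * P1 + 4 * Q1 - Q3 = -6 * (1 - X) * N2"
  shows "P4 - 4 * P2 + 4 * Q2 - Q4 = -6 * (1 - X) * N4"
  using assms by algebra

lemma even_id:
  "(Pf (Suc (Suc n)) - 4 * Pf n = -3 * Gf (Suc (Suc (2*n))) \<and>
    Pf (Suc (Suc n)) - 4 * Pf n + 4 * Qf n - Qf (Suc (Suc n)) = -6 * (1 - fps_X) * Nf (Suc (Suc (2*n)))) \<and>
   (Pf (Suc (Suc (Suc n))) - 4 * Pf (Suc n) = -3 * Gf (Suc (Suc (2*Suc n))) \<and>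
    Pf (Suc (Suc (Suc n))) - 4 * Pf (Suc n) + 4 * Qf (Suc n) - Qf (Suc (Suc (Suc n))) = -6 * (1 - fps_X) * Nf (Suc (Suc (2*Suc n))))"
proof (induction n)
  case 0
  show ?case
    by (simp add: fpsp fps_of_poly_const algebra_simps)
next
  case (Suc n)
  have i1: "Suc (Suc (2 * Suc (Suc n))) = Suc (Suc (2*n)) + 4" "Suc (Suc (2 * Suc n)) = Suc (Suc (2*n)) + 2" by simp_all
  have g: "Gf (Suc (Suc (2 * Suc (Suc n)))) = (5 + 9 * fps_X) * Gf (Suc (Suc (2 * Suc n))) - 4 * Gf (Suc (Suc (2*n)))"
    by (subst i1(1), subst i1(2), rule Grec) simp
  have nn: "Nf (Suc (Suc (2 * Suc (Suc n)))) = (5 + 9 * fps_X) * Nf (Suc (Suc (2 * Suc n))) - 4 * Nf (Suc (Suc (2*n)))"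
    by (subst i1(1), subst i1(2), rule Nrec) simp
  have p4: "Pf (Suc (Suc (Suc (Suc n)))) = (5 + 9 * fps_X) * Pf (Suc (Suc (Suc n))) - 4 * Pf (Suc (Suc n))"
    by (rule Pf.simps(3))
  have p2: "Pf (Suc (Suc n)) = (5 + 9 * fps_X) * Pf (Suc n) - 4 * Pf n"
    by (rule Pf.simps(3))
  have q4: "Qf (Suc (Suc (Suc (Suc n)))) = (5 + 9 * fps_X) * Qf (Suc (Suc (Suc n))) - 4 * Qf (Suc (Suc n)) + 6 * 2 ^ Suc (Suc (Suc n)) * (1 - fps_X)"
    by (rule Qf.simps(3))
  have q2: "Qf (Suc (Suc n)) = (5 + 9 * fps_X) * Qf (Suc n) - 4 * Qf n + 6 * 2 ^ Suc n * (1 - fps_X)"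
    by (rule Qf.simps(3))
  have t: "(2::real fps) ^ Suc (Suc (Suc n)) = 4 * 2 ^ Suc n" by simp
  note IH1 = Suc.IH[THEN conjunct1, THEN conjunct1] and IH2 = Suc.IH[THEN conjunct1, THEN conjunct2]
   and IH3 = Suc.IH[THEN conjunct2, THEN conjunct1] and IH4 = Suc.IH[THEN conjunct2, THEN conjunct2]
  show ?case
  proof (intro conjI)
    show "Pf (Suc (Suc (Suc (Suc n)))) - 4 * Pf (Suc (Suc n)) = -3 * Gf (Suc (Suc (2 * Suc (Suc n))))"
      by (rule alg_even1[OF g p4 p2 IH1 IH3])
    show "Pf (Suc (Suc (Suc (Suc n)))) - 4 * Pf (Suc (Suc n)) + 4 * Qf (Suc (Suc n)) - Qf (Suc (Suc (Suc (Suc n)))) =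
       -6 * (1 - fps_X) * Nf (Suc (Suc (2 * Suc (Suc n))))"
      by (rule alg_even2[OF nn p4 p2 q4[unfolded t] q2 IH2 IH4])
  qed (use IH3 IH4 in simp_all)
qed

lemma alg_odd1:
  fixes P0 P1 P2 P3 G0 G2 G4 c :: "real fps"
  assumes "G4 = c * G2 - 4 * G0" "P3 = c * P2 - 4 * P1" "P2 = c * P1 - 4 * P0"
    "P1 - 2 * P0 = - G0" "P2 - 2 * P1 = - G2"
  shows "P3 - 2 * P2 = - G4"
  using assms by algebra

lemma alg_odd2:
  fixes P0 P1 P2 P3 Q0 Q1 Q2 Q3 N0 N2 N4 c t X :: "real fps"
  assumes "N4 = c * N2 - 4 * N0" "P3 = c * P2 - 4 * P1" "P2 = c * P1 - 4 * P0"
    "Q3 = c * Q2 - 4 * Q1 + 6 * (2 * t) * (1 - X)" "Q2 = c * Q1 - 4 * Q0 + 6 * t * (1 - X)"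
    "P1 - 2 * P0 + 2 * Q0 - Q1 = -2 * (1 - X) * N0"
    "P2 - 2 * P1 + 2 * Q1 - Q2 = -2 * (1 - X) * N2"
  shows "P3 - 2 * P2 + 2 * Q2 - Q3 = -2 * (1 - X) * N4"
  using assms by algebra

lemma odd_id:
  "(Pf (Suc n) - 2 * Pf n = - Gf (Suc (2*n)) \<and>
    Pf (Suc n) - 2 * Pf n + 2 * Qf n - Qf (Suc n) = -2 * (1 - fps_X) * Nf (Suc (2*n))) \<and>
   (Pf (Suc (Suc n)) - 2 * Pf (Suc n) = - Gf (Suc (2*Suc n)) \<and>
    Pf (Suc (Suc n)) - 2 * Pf (Suc n) + 2 * Qf (Suc n) - Qf (Suc (Suc n)) = -2 * (1 - fps_X) * Nf (Suc (2*Suc n)))"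
proof (induction n)
  case 0
  show ?case
    by (simp add: fpsp fps_of_poly_const algebra_simps)
next
  case (Suc n)
  have i1: "Suc (2 * Suc (Suc n)) = Suc (2*n) + 4" "Suc (2 * Suc n) = Suc (2*n) + 2" by simp_all
  have g: "Gf (Suc (2 * Suc (Suc n))) = (5 + 9 * fps_X) * Gf (Suc (2 * Suc n)) - 4 * Gf (Suc (2*n))"
    by (subst i1(1), subst i1(2), rule Grec) simp
  have nn: "Nf (Suc (2 * Suc (Suc n))) = (5 + 9 * fps_X) * Nf (Suc (2 * Suc n)) - 4 * Nf (Suc (2*n))"
    by (subst i1(1), subst i1(2), rule Nrec) simp
  have p3: "Pf (Suc (Suc (Suc n))) = (5 + 9 * fps_X) * Pf (Suc (Suc n)) - 4 * Pf (Suc n)"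
    by (rule Pf.simps(3))
  have p2: "Pf (Suc (Suc n)) = (5 + 9 * fps_X) * Pf (Suc n) - 4 * Pf n"
    by (rule Pf.simps(3))
  have q3: "Qf (Suc (Suc (Suc n))) = (5 + 9 * fps_X) * Qf (Suc (Suc n)) - 4 * Qf (Suc n) + 6 * 2 ^ Suc (Suc n) * (1 - fps_X)"
    by (rule Qf.simps(3))
  have q2: "Qf (Suc (Suc n)) = (5 + 9 * fps_X) * Qf (Suc n) - 4 * Qf n + 6 * 2 ^ Suc n * (1 - fps_X)"
    by (rule Qf.simps(3))
  have t: "(2::real fps) ^ Suc (Suc n) = 2 * 2 ^ Suc n" by simp
  note IH1 = Suc.IH[THEN conjunct1, THEN conjunct1] and IH2 = Suc.IH[THEN conjunct1, THEN conjunct2]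
   and IH3 = Suc.IH[THEN conjunct2, THEN conjunct1] and IH4 = Suc.IH[THEN conjunct2, THEN conjunct2]
  show ?case
  proof (intro conjI)
    show "Pf (Suc (Suc (Suc n))) - 2 * Pf (Suc (Suc n)) = - Gf (Suc (2 * Suc (Suc n)))"
      by (rule alg_odd1[OF g p3 p2 IH1 IH3])
    show "Pf (Suc (Suc (Suc n))) - 2 * Pf (Suc (Suc n)) + 2 * Qf (Suc (Suc n)) - Qf (Suc (Suc (Suc n))) =
       -2 * (1 - fps_X) * Nf (Suc (2 * Suc (Suc n)))"
      by (rule alg_odd2[OF nn p3 p2 q3[unfolded t] q2 IH2 IH4])
  qed (use IH3 IH4 in simp_all)
qed



definition Hh :: "nat \<Rightarrow> nat \<Rightarrow> real fps" where
  "Hh k a = 2 ^ a * (1 - fps_X) * gg k a"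

lemma alg_H1:
  fixes V0 g0 g1 X :: "real fps"
  assumes "V0 = 1 + X * (g0 + V0)" "2 * g1 = g0 + 3 * V0"
  shows "2 * (1 - X) * g1 = (1 + 2 * X) * g0 + 3"
  using assms by algebra

lemma alg_H2:
  fixes g0 g1 g2 v1 t X P0 P1 Q0 Q1 psi :: "real fps"
  assumes "2 * g2 + 2 * g0 = 5 * g1 + 6 * v1" "2 * v1 = 2 + 3 * (X * g1)"
    "t * (1 - X) * g0 = P0 * psi + Q0" "2 * t * (1 - X) * g1 = P1 * psi + Q1"
  shows "2 * (2 * t) * (1 - X) * g2 = ((5 + 9 * X) * P1 - 4 * P0) * psi + ((5 + 9 * X) * Q1 - 4 * Q0 + 6 * (2 * t) * (1 - X))"
  using assms by algebra

lemma Hclaim: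
  assumes k: "1 \<le> k"
  shows "Suc a \<le> k \<Longrightarrow> Hh k a = Pf a * gg k 0 + Qf a \<and> Hh k (Suc a) = Pf (Suc a) * gg k 0 + Qf (Suc a)"
proof (induction a)
  case 0
  have "2 * (1 - fps_X) * gg k 1 = (1 + 2 * fps_X) * gg k 0 + 3"
    by (rule alg_H1[OF V0eq[OF k] g1eq[OF k]])
  then show ?case by (simp add: Hh_def)
next
  case (Suc a)
  have IH: "Hh k a = Pf a * gg k 0 + Qf a" "Hh k (Suc a) = Pf (Suc a) * gg k 0 + Qf (Suc a)"
    using Suc by auto
  have gr: "2 * gg k (Suc (Suc a)) + 2 * gg k a = 5 * gg k (Suc a) + 6 * V k (Suc a)"
    using grec[of "Suc a" k] Suc.prems by simp
  have vi: "2 * V k (Suc a) = 2 + 3 * (fps_X * gg k (Suc a))"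
    using Vieq[of "Suc a" k] Suc.prems by simp
  have h0: "2 ^ a * (1 - fps_X) * gg k a = Pf a * gg k 0 + Qf a" using IH(1) by (simp add: Hh_def)
  have h1: "2 * 2 ^ a * (1 - fps_X) * gg k (Suc a) = Pf (Suc a) * gg k 0 + Qf (Suc a)"
    using IH(2) unfolding Hh_def power_Suc .
  have "Hh k (Suc (Suc a)) = Pf (Suc (Suc a)) * gg k 0 + Qf (Suc (Suc a))"
    unfolding Hh_def Pf.simps(3) Qf.simps(3) power_Suc
    by (rule alg_H2[OF gr vi h0 h1])
  then show ?case using IH by simp
qed

lemma alg_even_final:
  fixes V0 psi P0 P2 Q0 Q2 G N X :: "real fps"
  assumes "V0 = 1 + X * (psi + V0)" "P2 * psi + Q2 = 4 * (P0 * psi + Q0)" "P2 - 4 * P0 = -3 * G"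
    "P2 - 4 * P0 + 4 * Q0 - Q2 = -6 * (1 - X) * N"
  shows "-3 * (1 - X) * ((V0 - 1) * G - 2 * X * N) = 0"
  using assms by algebra

lemma alg_odd_final:
  fixes V0 psi P0 P1 Q0 Q1 G N X :: "real fps"
  assumes "V0 = 1 + X * (psi + V0)" "P1 * psi + Q1 = 2 * (P0 * psi + Q0)" "P1 - 2 * P0 = - G"
    "P1 - 2 * P0 + 2 * Q0 - Q1 = -2 * (1 - X) * N"
  shows "- (1 - X) * ((V0 - 1) * G - 2 * X * N) = 0"
  using assms by algebra

lemma one_minus_X_nz: "(1 - fps_X :: real fps) \<noteq> 0"
proof
  assume "(1 - fps_X :: real fps) = 0"
  then have "(1 - fps_X :: real fps) $ 0 = 0" by simp
  then show False by simp
qed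

lemma V0m1:
  assumes k: "1 \<le> k"
  shows "(V k 0 - 1) * Gf k = 2 * fps_X * Nf k"
proof (cases "even k")
  case True
  define m where "m = k div 2"
  have m: "k = 2 * m" using True by (simp add: m_def)
  then have "m \<ge> 1" using k by simp
  then obtain n where n: "m = Suc n" by (cases m) auto
  have kn: "k = Suc (Suc (2 * n))" using m n by simp
  have A: "Hh k n = Pf n * gg k 0 + Qf n" using Hclaim[OF k, of n] kn by simp
  have B: "Hh k (Suc (Suc n)) = Pf (Suc (Suc n)) * gg k 0 + Qf (Suc (Suc n))"
    using Hclaim[OF k, of "Suc n"] kn by simp
  have "gg k (k - n) = gg k n" by (rule gg_sym) (use kn in simp)
  then have gs: "gg k (Suc (Suc n)) = gg k n" using kn by (simp add: numeral_2_eq_2)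
  have "Hh k (Suc (Suc n)) = 4 * Hh k n" unfolding Hh_def gs by (simp add: algebra_simps)
  then have E: "Pf (Suc (Suc n)) * gg k 0 + Qf (Suc (Suc n)) = 4 * (Pf n * gg k 0 + Qf n)"
    using A B by simp
  note ev = even_id[of n, THEN conjunct1]
  have ev1: "Pf (Suc (Suc n)) - 4 * Pf n = -3 * Gf k" using ev kn by blast
  have ev2: "Pf (Suc (Suc n)) - 4 * Pf n + 4 * Qf n - Qf (Suc (Suc n)) = -6 * (1 - fps_X) * Nf k" using ev kn by blast
  have "-3 * (1 - fps_X) * ((V k 0 - 1) * Gf k - 2 * fps_X * Nf k) = 0"
    by (rule alg_even_final[OF V0eq[OF k] E ev1 ev2])
  moreover have "-3 * (1 - fps_X) \<noteq> (0::real fps)" using one_minus_X_nz by (simp only: mult_eq_0_iff) simp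
  ultimately have "(V k 0 - 1) * Gf k - 2 * fps_X * Nf k = 0" by (metis mult_eq_0_iff)
  then show ?thesis by (simp only: right_minus_eq)
next
  case False
  define m where "m = k div 2"
  have m: "k = Suc (2 * m)" using False unfolding m_def by presburger
  have A: "Hh k m = Pf m * gg k 0 + Qf m" and B: "Hh k (Suc m) = Pf (Suc m) * gg k 0 + Qf (Suc m)"
    using Hclaim[OF k, of m] m by simp_all
  have "gg k (k - m) = gg k m" by (rule gg_sym) (use m in simp)
  then have gs: "gg k (Suc m) = gg k m" using m by simp
  have "Hh k (Suc m) = 2 * Hh k m" unfolding Hh_def gs by (simp add: algebra_simps)
  then have E: "Pf (Suc m) * gg k 0 + Qf (Suc m) = 2 * (Pf m * gg k 0 + Qf m)"
    using A B by simp
  note od = odd_id[of m, THEN conjunct1]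
  have od1: "Pf (Suc m) - 2 * Pf m = - Gf k" using od m by blast
  have od2: "Pf (Suc m) - 2 * Pf m + 2 * Qf m - Qf (Suc m) = -2 * (1 - fps_X) * Nf k" using od m by blast
  have "- (1 - fps_X) * ((V k 0 - 1) * Gf k - 2 * fps_X * Nf k) = 0"
    by (rule alg_odd_final[OF V0eq[OF k] E od1 od2])
  moreover have "- (1 - fps_X) \<noteq> (0::real fps)" using one_minus_X_nz by simp
  ultimately have "(V k 0 - 1) * Gf k - 2 * fps_X * Nf k = 0" by (metis mult_eq_0_iff)
  then show ?thesis by (simp only: right_minus_eq)
qed

lemma Gf0: "1 \<le> k \<Longrightarrow> Gf k $ 0 = 1"
proof (induction k rule: less_induct)
  case (less k)
  show ?case
  proof (cases "k \<le> 4")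
    case True
    then have "k = 1 \<or> k = 2 \<or> k = 3 \<or> k = 4" using less.prems by auto
    then show ?thesis by (auto simp: numeral_eq_Suc)
  next
    case False
    define j where "j = k - 4"
    have j: "k = j + 4" "1 \<le> j" using False by (simp_all add: j_def)
    have "Gf (j + 2) $ 0 = 1" "Gf j $ 0 = 1" using less.IH j by auto
    then show ?thesis unfolding j(1) Grec[OF j(2)] by simp
  qed
qed


theorem proposition2p2:
  fixes k :: nat
  assumes "k \<ge> 1"
  shows "Abs_fps (\<lambda>l. if l = 0 then 0 else EX2 k l)
         = fps_const 2 * fps_X * fps_of_poly (Npoly k) / fps_of_poly (Gpoly k)"
proof -
  have k: "1 \<le> k" using assms .
  have A: "Abs_fps (\<lambda>l. if l = 0 then 0 else EX2 k l) = V k 0 - 1"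
  proof (rule fps_ext)
    fix n show "Abs_fps (\<lambda>l. if l = 0 then 0 else EX2 k l) $ n = (V k 0 - 1) $ n"
      by (cases n) (simp_all add: V_def EX2_uu)
  qed
  have nz: "Gf k \<noteq> 0"
  proof
    assume "Gf k = 0"
    then have "Gf k $ 0 = 0" by simp
    then show False using Gf0[OF k] by simp
  qed
  have "fps_const 2 * fps_X * Nf k = (V k 0 - 1) * Gf k"
    by (subst V0m1[OF k]) (simp add: fps_numeral_fps_const)
  then have "fps_const 2 * fps_X * Nf k / Gf k = ((V k 0 - 1) * Gf k) / Gf k" by simp
  also have "\<dots> = V k 0 - 1" by (rule fps_divide_times_eq[OF nz])
  finally show ?thesis using A by simp
qed

end
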